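(* Let $h\in\mathbb N$, $i\in[h-1]$, and $u,v\in\mathfrak S_n$ with $u<v$. Let $F$ be an $h$-flipclass of paths from $u$ to $v$. For any two vertices $(x,i-1)$ and $(y,i+1)$ of $TS_F$, the number of paths of length $2$ from $(x,i-1)$ to $(y,i+1)$ in $TS_F$ is $0$, $1$, or $2$.
   Context: $\mathfrak S_n$ is the symmetric group on $[n]$, $T$ its transpositions, $\ell$ the length w.r.t. simple transpositions. The Bruhat graph $B(\mathfrak S_n)$ has an edge $x\xrightarrow{t}y$ iff $yx^{-1}=t\in T$ and $\ell(x)<\ell(y)$; Bruhat order: $x\le y$ iff there is a directed path from $x$ to $y$. $P_h(u,v)$ is the set of paths $u=x_0\to\cdots\to x_h=v$ of length $h$. Between two fixed vertices there are $0$ or $2$ paths of length $2$, each the flip of the other; the $i$-th flip operator $f_i$ on $P_h(u,v)$ replaces $x_{i-1}\to x_i\to x_{i+1}$ by its flip; the orbits of $\langle f_1,\dots,f_{h-1}\rangle$ on $P_h(u,v)$ are the $h$-flipclasses of paths from $u$ to $v$. The time-support graph $TS_F$ has vertices $(a,j)$ ($0\le j\le h$) such that some path $(x_0,\dots,x_h)\in F$ has $x_j=a$, and edges $(a,j)\xrightarrow{t}(b,j+1)$ whenever some path of $F$ contains the edge $x_j=a\xrightarrow{t}b=x_{j+1}$. *)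

theory Defs
  imports "HOL-Combinatorics.Permutations" "HOL-Combinatorics.Transposition"
begin

definition Sym :: "nat \<Rightarrow> (nat \<Rightarrow> nat) set" where
  "Sym n = {x. x permutes {1..n}}"

definition transpositions :: "nat \<Rightarrow> (nat \<Rightarrow> nat) set" where
  "transpositions n = {transpose a b | a b. a \<in> {1..n} \<and> b \<in> {1..n} \<and> a \<noteq> b}"

definition simple_transpositions :: "nat \<Rightarrow> (nat \<Rightarrow> nat) set" where
  "simple_transpositions n = {transpose i (i + 1) | i. 1 \<le> i \<and> i < n}"

definition len :: "nat \<Rightarrow> (nat \<Rightarrow> nat) \<Rightarrow> nat" where
  "len n x = (LEAST k. \<exists>ss. length ss = k \<and> set ss \<subseteq> simple_transpositions n
                              \<and> x = foldr (\<circ>) ss id)"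

definition bruhat_edge :: "nat \<Rightarrow> (nat \<Rightarrow> nat) \<Rightarrow> (nat \<Rightarrow> nat) \<Rightarrow> bool" where
  "bruhat_edge n x y \<longleftrightarrow> x \<in> Sym n \<and> y \<in> Sym n \<and>
     y \<circ> inv x \<in> transpositions n \<and> len n x < len n y"

definition bruhat_less :: "nat \<Rightarrow> (nat \<Rightarrow> nat) \<Rightarrow> (nat \<Rightarrow> nat) \<Rightarrow> bool" where
  "bruhat_less n u v \<longleftrightarrow> (bruhat_edge n)\<^sup>+\<^sup>+ u v"

definition paths :: "nat \<Rightarrow> nat \<Rightarrow> (nat \<Rightarrow> nat) \<Rightarrow> (nat \<Rightarrow> nat) \<Rightarrow> (nat \<Rightarrow> nat) list set" where
  "paths n h u v = {p. length p = h + 1 \<and> p ! 0 = u \<and> p ! h = v \<and>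
                      (\<forall>j<h. bruhat_edge n (p ! j) (p ! (j + 1)))}"

definition flip_step :: "nat \<Rightarrow> nat \<Rightarrow> (nat \<Rightarrow> nat) \<Rightarrow> (nat \<Rightarrow> nat) \<Rightarrow>
     (nat \<Rightarrow> nat) list \<Rightarrow> (nat \<Rightarrow> nat) list \<Rightarrow> bool" where
  "flip_step n h u v p q \<longleftrightarrow> p \<in> paths n h u v \<and>
     (\<exists>i z. 1 \<le> i \<and> i \<le> h - 1 \<and> z \<noteq> p ! i \<and>
        bruhat_edge n (p ! (i - 1)) z \<and> bruhat_edge n z (p ! (i + 1)) \<and>
        q = p[i := z])"

definition flipclass :: "nat \<Rightarrow> nat \<Rightarrow> (nat \<Rightarrow> nat) \<Rightarrow> (nat \<Rightarrow> nat) \<Rightarrow>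
     (nat \<Rightarrow> nat) list set \<Rightarrow> bool" where
  "flipclass n h u v F \<longleftrightarrow>
     (\<exists>p \<in> paths n h u v. F = {q. (flip_step n h u v)\<^sup>*\<^sup>* p q})"

definition ts_vertex :: "nat \<Rightarrow> (nat \<Rightarrow> nat) list set \<Rightarrow> (nat \<Rightarrow> nat) \<times> nat \<Rightarrow> bool" where
  "ts_vertex h F aj \<longleftrightarrow> snd aj \<le> h \<and> (\<exists>p\<in>F. p ! snd aj = fst aj)"

definition ts_edge :: "nat \<Rightarrow> (nat \<Rightarrow> nat) list set \<Rightarrow>
     (nat \<Rightarrow> nat) \<times> nat \<Rightarrow> (nat \<Rightarrow> nat) \<times> nat \<Rightarrow> bool" where
  "ts_edge h F aj bk \<longleftrightarrow> snd aj < h \<and> snd bk = snd aj + 1 \<and>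
     (\<exists>p\<in>F. p ! snd aj = fst aj \<and> p ! snd bk = fst bk)"

end

theory Submission
  imports Defs
begin


definition valid :: "(nat \<Rightarrow> nat) \<Rightarrow> (nat \<Rightarrow> nat) \<Rightarrow> nat \<Rightarrow> nat \<Rightarrow> bool" where
  "valid g p a b \<longleftrightarrow> a < b \<and> p a < p b \<and> (\<exists>c d. c < d \<and> g = transpose c d \<circ> transpose a b
      \<and> p (transpose a b c) < p (transpose a b d))"

lemma tr_eq: "a \<noteq> b \<Longrightarrow> transpose c d b = a \<Longrightarrow> transpose c d = transpose a b"
  by (auto simp: transpose_def split: if_splits intro!: ext)

lemma valid_nid: assumes "valid g p a b" shows "g \<noteq> id"
proof
  assume g: "g = id"
  from assms obtain c d where cd: "c < d" "g = transpose c d \<circ> transpose a b"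
     "p (transpose a b c) < p (transpose a b d)" and ab: "a < b" "p a < p b"
    unfolding valid_def by blast
  have "transpose c d = (transpose c d \<circ> transpose a b) \<circ> transpose a b"
    by (simp add: comp_assoc)
  hence tt: "transpose c d = transpose a b" using cd(2) g by simp
  have "transpose c d c = transpose a b c" "transpose c d d = transpose a b d" using tt by simp_all
  hence "c = a \<and> d = b" using cd(1) ab(1) by (auto simp: transpose_def split: if_splits)
  thus False using cd(3) ab(2) by simp
qed

lemma valid_supp: assumes "valid g p a b" shows "g a \<noteq> a \<and> g b \<noteq> b"
proof -
  from assms obtain c d where cd: "c < d" "g = transpose c d \<circ> transpose a b"
     and ab: "a < b" unfolding valid_def by blast
  have nid: "g \<noteq> id" using valid_nid[OF assms] .
  have "g a \<noteq> a"
  proof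
    assume "g a = a"
    hence "transpose c d b = a" using cd by simp
    hence "transpose c d = transpose a b" using tr_eq[of a b c d] ab by simp
    hence "g = id" using cd by simp
    thus False using nid by simp
  qed
  moreover have "g b \<noteq> b"
  proof
    assume "g b = b"
    hence "transpose c d a = b" using cd by simp
    hence "transpose c d = transpose b a" using tr_eq[of b a c d] ab by simp
    hence "g = id" using cd by (simp add: transpose_commute)
    thus False using nid by simp
  qed
  ultimately show ?thesis by simp
qed

lemma valid_inj: assumes "valid g p a b" shows "inj g"
  using assms unfolding valid_def by (auto intro: inj_compose)

lemma three_sort:
  fixes a b c d :: nat
  assumes "a < b" "c < d" "(a = c \<or> a = d \<or> b = c \<or> b = d)"
  shows "\<exists>\<alpha> \<beta> \<gamma>. \<alpha> < \<beta> \<and> \<beta> < \<gamma> \<and> {a,b,c,d} \<subseteq> {\<alpha>,\<beta>,\<gamma>}"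
proof -
  consider "a = c" "d < b" | "a = c" "b \<le> d" | "a = d" | "b = c" | "b = d" "c < a" | "b = d" "a \<le> c"
    using assms by linarith
  then show ?thesis
  proof cases
    case 1 thus ?thesis using assms by (intro exI[of _ a] exI[of _ d] exI[of _ b]) auto
  next
    case 2 thus ?thesis using assms
      by (cases "b = d") ((intro exI[of _ a] exI[of _ b] exI[of _ "b+1"]; auto),
           (intro exI[of _ a] exI[of _ b] exI[of _ d]; auto))
  next
    case 3 thus ?thesis using assms by (intro exI[of _ c] exI[of _ a] exI[of _ b]) auto
  next
    case 4 thus ?thesis using assms by (intro exI[of _ a] exI[of _ b] exI[of _ d]) auto
  next
    case 5 thus ?thesis using assms by (intro exI[of _ c] exI[of _ a] exI[of _ b]) auto
  next
    case 6 thus ?thesis using assms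
      by (cases "a = c") ((intro exI[of _ a] exI[of _ b] exI[of _ "b+1"]; auto),
           (intro exI[of _ a] exI[of _ c] exI[of _ b]; auto))
  qed
qed

lemma fin3:
  assumes lt: "\<alpha> < \<beta>" "\<beta> < \<gamma>"
    and v: "valid g p \<alpha> \<beta>" "valid g p \<beta> \<gamma>" "valid g p \<alpha> \<gamma>"
    and M: "\<And>q. g q \<noteq> q \<Longrightarrow> q \<in> {\<alpha>,\<beta>,\<gamma>}"
  shows False
proof -
  have p1: "p \<alpha> < p \<beta>" "p \<beta> < p \<gamma>" using v(1,2) unfolding valid_def by auto
  from v(3) obtain c d where cd: "c < d" "g = transpose c d \<circ> transpose \<alpha> \<gamma>"
     "p (transpose \<alpha> \<gamma> c) < p (transpose \<alpha> \<gamma> d)" unfolding valid_def by blast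
  have gb: "g \<beta> \<noteq> \<beta>" using valid_supp[OF v(1)] by simp
  have "g (g \<beta>) \<noteq> g \<beta>" using gb valid_inj[OF v(1)] by (meson injD)
  hence gbin: "g \<beta> \<in> {\<alpha>,\<gamma>}" using M gb by blast
  have tb: "transpose \<alpha> \<gamma> \<beta> = \<beta>" using lt by simp
  have sb: "transpose c d \<beta> = g \<beta>" using cd(2) tb by simp
  show False
  proof (cases "g \<beta> = \<alpha>")
    case True
    hence "transpose c d \<beta> = \<alpha>" using sb by simp
    hence "c = \<alpha> \<and> d = \<beta>" using cd(1) lt by (auto simp: transpose_def split: if_splits)
    thus False using cd(3) p1 lt by simp
  next
    case False
    hence "transpose c d \<beta> = \<gamma>" using sb gbin by simp
    hence "c = \<beta> \<and> d = \<gamma>" using cd(1) lt by (auto simp: transpose_def split: if_splits)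
    thus False using cd(3) p1 lt by simp
  qed
qed

lemma pair_in3:
  fixes \<alpha> \<beta> \<gamma> a b :: nat
  assumes "\<alpha> < \<beta>" "\<beta> < \<gamma>" "a \<in> {\<alpha>,\<beta>,\<gamma>}" "b \<in> {\<alpha>,\<beta>,\<gamma>}" "a < b"
  shows "(a,b) \<in> {(\<alpha>,\<beta>),(\<beta>,\<gamma>),(\<alpha>,\<gamma>)}"
  using assms by auto

lemma pick3:
  assumes "P x1" "P x2" "P x3" "x1 \<in> {A,B,C}" "x2 \<in> {A,B,C}" "x3 \<in> {A,B,C}"
    "x1 \<noteq> x2" "x1 \<noteq> x3" "x2 \<noteq> x3"
  shows "P A \<and> P B \<and> P C"
  using assms by auto

lemma four:
  fixes a1 b1 c1 d1 a b c d :: nat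
  assumes "a1 \<noteq> b1" "a1 \<noteq> c1" "a1 \<noteq> d1" "b1 \<noteq> c1" "b1 \<noteq> d1" "c1 \<noteq> d1"
    "a \<in> {a1,b1,c1,d1}" "b \<in> {a1,b1,c1,d1}" "a \<noteq> b"
    "\<And>q. q \<in> {a1,b1,c1,d1} \<Longrightarrow> q \<noteq> a \<Longrightarrow> q \<noteq> b \<Longrightarrow> q \<in> {c,d}"
  shows "a \<notin> {c,d} \<and> b \<notin> {c,d}"
proof -
  have h: "a1 \<noteq> a \<and> a1 \<noteq> b \<longrightarrow> a1 \<in> {c,d}" "b1 \<noteq> a \<and> b1 \<noteq> b \<longrightarrow> b1 \<in> {c,d}"
    "c1 \<noteq> a \<and> c1 \<noteq> b \<longrightarrow> c1 \<in> {c,d}" "d1 \<noteq> a \<and> d1 \<noteq> b \<longrightarrow> d1 \<in> {c,d}"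
    using assms(10) by blast+
  show ?thesis using assms(1-9) h by auto
qed

lemma core:
  assumes v: "valid g p a1 b1" "valid g p a2 b2" "valid g p a3 b3"
    and d: "(a1,b1) \<noteq> (a2,b2)" "(a1,b1) \<noteq> (a3,b3)" "(a2,b2) \<noteq> (a3,b3)"
  shows False
proof -
  from v(1) obtain c1 d1 where cd1: "c1 < d1" "g = transpose c1 d1 \<circ> transpose a1 b1"
     and ab1: "a1 < b1" unfolding valid_def by blast
  have M: "\<And>q. g q \<noteq> q \<Longrightarrow> q \<in> {a1,b1,c1,d1}"
    using cd1(2) by (auto simp: transpose_def split: if_splits)
  have s2: "a2 \<in> {a1,b1,c1,d1}" "b2 \<in> {a1,b1,c1,d1}"
    "a3 \<in> {a1,b1,c1,d1}" "b3 \<in> {a1,b1,c1,d1}"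
    using M valid_supp[OF v(2)] valid_supp[OF v(3)] by auto
  have o2: "a2 < b2" "a3 < b3" using v unfolding valid_def by auto
  show False
  proof (cases "a1 = c1 \<or> a1 = d1 \<or> b1 = c1 \<or> b1 = d1")
    case True
    then obtain \<alpha> \<beta> \<gamma> where abc: "\<alpha> < \<beta>" "\<beta> < \<gamma>" "{a1,b1,c1,d1} \<subseteq> {\<alpha>,\<beta>,\<gamma>}"
      using three_sort[OF ab1 cd1(1)] by blast
    have M3: "\<And>q. g q \<noteq> q \<Longrightarrow> q \<in> {\<alpha>,\<beta>,\<gamma>}" using M abc(3) by blast
    have m: "a1 \<in> {\<alpha>,\<beta>,\<gamma>}" "b1 \<in> {\<alpha>,\<beta>,\<gamma>}" "a2 \<in> {\<alpha>,\<beta>,\<gamma>}"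
      "b2 \<in> {\<alpha>,\<beta>,\<gamma>}" "a3 \<in> {\<alpha>,\<beta>,\<gamma>}" "b3 \<in> {\<alpha>,\<beta>,\<gamma>}"
      using abc(3) s2 by blast+
    have in3: "(a1,b1) \<in> {(\<alpha>,\<beta>),(\<beta>,\<gamma>),(\<alpha>,\<gamma>)}" "(a2,b2) \<in> {(\<alpha>,\<beta>),(\<beta>,\<gamma>),(\<alpha>,\<gamma>)}"
      "(a3,b3) \<in> {(\<alpha>,\<beta>),(\<beta>,\<gamma>),(\<alpha>,\<gamma>)}"
      using pair_in3[OF abc(1,2)] m o2 ab1 by blast+
    have "valid g p \<alpha> \<beta> \<and> valid g p \<beta> \<gamma> \<and> valid g p \<alpha> \<gamma>"
      using pick3[of "\<lambda>(a,b). valid g p a b", OF _ _ _ in3 d] v by simp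
    thus False using fin3[OF abc(1,2)] M3 by blast
  next
    case False
    have gc: "g c1 = d1" "g d1 = c1" "g a1 = b1" "g b1 = a1" using False cd1 by auto
    have key: "g a = b" if va: "valid g p a b" and ins: "a \<in> {a1,b1,c1,d1}" "b \<in> {a1,b1,c1,d1}" for a b
    proof -
      from va obtain c d where cd: "c < d" "g = transpose c d \<circ> transpose a b"
        and ab: "a < b" unfolding valid_def by blast
      have out: "q \<in> {c,d}" if "q \<in> {a1,b1,c1,d1}" "q \<noteq> a" "q \<noteq> b" for q
      proof -
        have "g q \<noteq> q" using that gc False cd1(1) ab1 by auto
        thus ?thesis using cd(2) that by (auto simp: transpose_def split: if_splits)
      qed
      have "a \<notin> {c,d} \<and> b \<notin> {c,d}"
        using four[of a1 b1 c1 d1 a b c d] out ins ab False cd1(1) ab1 by auto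
      thus ?thesis using cd(2) ab by auto
    qed
    have k2: "g a2 = b2" "g a3 = b3" using key v s2 by auto
    have two: "(a,b) = (a1,b1) \<or> (a,b) = (c1,d1)" if hh: "a \<in> {a1,b1,c1,d1}" "g a = b" "a < b" for a b
    proof -
      consider "a = a1" | "a = b1" | "a = c1" | "a = d1" using hh(1) by blast
      thus ?thesis
      proof cases
        case 1 thus ?thesis using hh gc by simp
      next
        case 2 thus ?thesis using hh gc ab1 by simp
      next
        case 3 thus ?thesis using hh gc by simp
      next
        case 4 thus ?thesis using hh gc cd1(1) by simp
      qed
    qed
    have "(a2,b2) = (c1,d1)" using two[of a2 b2] k2 s2 o2 d(1) by metis
    moreover have "(a3,b3) = (c1,d1)" using two[of a3 b3] k2 s2 o2 d(2) by metis
    ultimately show False using d(3) by simp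
  qed
qed


definition invset :: "nat \<Rightarrow> (nat \<Rightarrow> nat) \<Rightarrow> (nat \<times> nat) set" where
  "invset n r = {(c,d). c \<in> {1..n} \<and> d \<in> {1..n} \<and> c < d \<and> r d < r c}"

lemma finite_invset: "finite (invset n r)"
  by (rule finite_subset[of _ "{1..n} \<times> {1..n}"]) (auto simp: invset_def)

lemma inj_strict:
  assumes ab: "a < b" "a \<in> {1..n}" "b \<in> {1..n}" and r: "r a < r b"
  shows "card (invset n r) < card (invset n (r \<circ> transpose a b))"
proof -
  define t where "t = transpose a b"
  define f where "f = (\<lambda>(c,d). if t c < t d then (t c, t d) else (c::nat,d::nat))"
  have tt: "t (t q) = q" for q by (simp add: t_def)
  have tin: "q \<in> {1..n} \<Longrightarrow> t q \<in> {1..n}" for q using ab by (auto simp: t_def transpose_def)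
  have "inj_on f (invset n r)"
  proof (rule inj_onI)
    fix x y assume x: "x \<in> invset n r" and y: "y \<in> invset n r" and e: "f x = f y"
    obtain c d where xc: "x = (c,d)" by fastforce
    obtain c' d' where yc: "y = (c',d')" by fastforce
    have cd: "c < d" "c' < d'" using x y xc yc by (auto simp: invset_def)
    show "x = y"
    proof (cases "t c < t d")
      case True
      show ?thesis
      proof (cases "t c' < t d'")
        case True
        hence "t c = t c'" "t d = t d'" using e \<open>t c < t d\<close> xc yc by (auto simp: f_def)
        hence "c = c'" "d = d'" using tt by metis+
        thus ?thesis using xc yc by simp
      next
        case False
        hence "t c = c'" "t d = d'" using e \<open>t c < t d\<close> xc yc by (auto simp: f_def)
        hence "t c' = c" "t d' = d" using tt by metis+
        thus ?thesis using False cd by simp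
      qed
    next
      case False
      show ?thesis
      proof (cases "t c' < t d'")
        case True
        hence "t c' = c" "t d' = d" using e False xc yc by (auto simp: f_def)
        thus ?thesis using False cd tt by metis
      next
        case False
        thus ?thesis using e \<open>\<not> t c < t d\<close> xc yc by (auto simp: f_def)
      qed
    qed
  qed
  moreover have "f ` invset n r \<subseteq> invset n (r \<circ> t) - {(a,b)}"
  proof
    fix y assume "y \<in> f ` invset n r"
    then obtain c d where cd: "(c,d) \<in> invset n r" and y: "y = f (c,d)" by auto
    have c: "c \<in> {1..n}" "d \<in> {1..n}" "c < d" "r d < r c" using cd by (auto simp: invset_def)
    show "y \<in> invset n (r \<circ> t) - {(a,b)}"
    proof (cases "t c < t d")
      case True
      have "t a = b" "t b = a" by (simp_all add: t_def)
      hence "(t c, t d) \<noteq> (a,b)" using c(3) ab(1) tt by (metis Pair_inject order_less_asym)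
      thus ?thesis using y c tin tt ab r True by (auto simp: f_def invset_def)
    next
      case False
      hence "(c = a \<and> a < d \<and> d < b) \<or> (d = b \<and> a < c \<and> c < b)"
        using c ab r by (auto simp: t_def transpose_def split: if_splits)
      thus ?thesis using y c False ab r by (auto simp: f_def invset_def t_def)
    qed
  qed
  ultimately have "card (invset n r) \<le> card (invset n (r \<circ> t) - {(a,b)})"
    by (metis card_image card_mono finite_Diff finite_invset)
  moreover have "(a,b) \<in> invset n (r \<circ> t)" using ab r by (auto simp: invset_def t_def)
  moreover have "card (invset n (r \<circ> t) - {(a,b)}) = card (invset n (r \<circ> t)) - 1"
    using calculation(2) finite_invset by (simp add: card_Diff_singleton)
  moreover have "card (invset n (r \<circ> t)) > 0"
    using calculation(2) finite_invset card_gt_0_iff by blast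
  ultimately show ?thesis unfolding t_def by linarith
qed
lemma simple_up:
  assumes k: "1 \<le> k" "k < n"
  shows "card (invset n (r \<circ> transpose k (k+1))) \<le> card (invset n r) + 1"
proof -
  define s where "s = transpose k (k+1)"
  define f where "f = (\<lambda>(c,d). (s c, s (d::nat)))"
  have ss: "s (s q) = q" for q by (simp add: s_def)
  have sin: "q \<in> {1..n} \<Longrightarrow> s q \<in> {1..n}" for q using k by (auto simp: s_def transpose_def)
  have sub: "invset n (r \<circ> s) \<subseteq> insert (k,k+1) (f ` invset n r)"
  proof
    fix x assume x: "x \<in> invset n (r \<circ> s)"
    obtain c d where xc: "x = (c,d)" by fastforce
    have c: "c \<in> {1..n}" "d \<in> {1..n}" "c < d" "r (s d) < r (s c)" using x xc by (auto simp: invset_def)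
    show "x \<in> insert (k,k+1) (f ` invset n r)"
    proof (cases "x = (k,k+1)")
      case False
      have "s c < s d" using c(3) False xc by (auto simp: s_def transpose_def)
      hence "(s c, s d) \<in> invset n r" using c sin by (auto simp: invset_def)
      moreover have "x = f (s c, s d)" using xc ss by (simp add: f_def)
      ultimately show ?thesis by blast
    qed simp
  qed
  have "card (invset n (r \<circ> s)) \<le> card (insert (k,k+1) (f ` invset n r))"
    by (rule card_mono[OF _ sub]) (simp add: finite_invset)
  also have "\<dots> \<le> card (f ` invset n r) + 1"
    by (simp add: card_insert_if finite_invset)
  also have "\<dots> \<le> card (invset n r) + 1"
    using card_image_le[OF finite_invset] by simp
  finally show ?thesis unfolding s_def .
qed

lemma lower:
  assumes "set ss \<subseteq> simple_transpositions n"
  shows "bij (foldr (\<circ>) ss id) \<and> card (invset n (inv (foldr (\<circ>) ss id))) \<le> length ss"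
  using assms
proof (induction ss)
  case Nil
  have "invset n (\<lambda>x. x) = {}" by (auto simp: invset_def)
  thus ?case by (simp add: bij_id[unfolded id_def] id_def)
next
  case (Cons s ss)
  then obtain k where k: "1 \<le> k" "k < n" "s = transpose k (k+1)"
    by (auto simp: simple_transpositions_def)
  have IH: "bij (foldr (\<circ>) ss id)" "card (invset n (inv (foldr (\<circ>) ss id))) \<le> length ss"
  proof -
    have "set ss \<subseteq> simple_transpositions n" using Cons.prems by simp
    from Cons.IH[OF this] show "bij (foldr (\<circ>) ss id)" "card (invset n (inv (foldr (\<circ>) ss id))) \<le> length ss"
      by blast+
  qed
  have e: "foldr (\<circ>) (s # ss) id = s \<circ> foldr (\<circ>) ss id" by simp
  have bs: "bij s" using k by simp
  have "inv (foldr (\<circ>) (s # ss) id) = inv (foldr (\<circ>) ss id) \<circ> s"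
    unfolding e using o_inv_distrib[OF bs IH(1)] k by simp
  hence A: "card (invset n (inv (foldr (\<circ>) (s # ss) id))) \<le> card (invset n (inv (foldr (\<circ>) ss id))) + 1"
    using simple_up[OF k(1,2)] k(3) by simp
  have B: "bij (foldr (\<circ>) (s # ss) id)" unfolding e by (rule bij_comp[OF IH(1) bs])
  have C: "card (invset n (inv (foldr (\<circ>) (s # ss) id))) \<le> length (s # ss)"
    unfolding length_Cons using A IH(2) by linarith
  show ?case using B C by (rule conjI)
qed

lemma mono_perm_id:
  fixes r :: "nat \<Rightarrow> nat"
  assumes p: "r permutes {1..n}" and m: "\<And>k. 1 \<le> k \<Longrightarrow> k < n \<Longrightarrow> r k < r (k+1)"
  shows "r = id"
proof -
  have inr: "q \<in> {1..n} \<Longrightarrow> r q \<in> {1..n}" for q using permutes_in_image[OF p] by simp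
  have ge: "1 \<le> k \<longrightarrow> k \<le> n \<longrightarrow> k \<le> r k" for k
  proof (induction k)
    case (Suc k)
    show ?case
    proof (cases "k = 0")
      case True thus ?thesis using inr[of 1] by auto
    next
      case False thus ?thesis using Suc m[of k] by auto
    qed
  qed simp
  have le: "j < n \<longrightarrow> r (n - j) \<le> n - j" for j
  proof (induction j)
    case 0 thus ?case using inr[of n] by auto
  next
    case (Suc j)
    show ?case
    proof
      assume j: "Suc j < n"
      have "r (n - Suc j) < r (n - Suc j + 1)" using m[of "n - Suc j"] j by auto
      moreover have "n - Suc j + 1 = n - j" using j by auto
      ultimately show "r (n - Suc j) \<le> n - Suc j" using Suc j by auto
    qed
  qed
  show ?thesis
  proof
    fix q show "r q = id q"
    proof (cases "q \<in> {1..n}")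
      case True
      have "r (n - (n - q)) \<le> n - (n - q)" using le[of "n - q"] True by auto
      thus ?thesis using ge[of q] True by auto
    next
      case False thus ?thesis using permutes_not_in[OF p] by simp
    qed
  qed
qed

lemma upper:
  assumes "w permutes {1..n}"
  shows "\<exists>ss. set ss \<subseteq> simple_transpositions n \<and> w = foldr (\<circ>) ss id
     \<and> length ss \<le> card (invset n (inv w))"
  using assms
proof (induction "card (invset n (inv w))" arbitrary: w rule: less_induct)
  case less
  define r where "r = inv w"
  have rp: "r permutes {1..n}" using permutes_inv[OF less.prems] r_def by simp
  show ?case
  proof (cases "\<exists>k. 1 \<le> k \<and> k < n \<and> r (k+1) < r k")
    case True
    then obtain k where k: "1 \<le> k" "k < n" "r (k+1) < r k" by blast
    define s where "s = transpose k (k+1)"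
    have sp: "s permutes {1..n}" unfolding s_def using k by (intro permutes_swap_id) auto
    define w0 where "w0 = s \<circ> w"
    have w0p: "w0 permutes {1..n}" unfolding w0_def by (rule permutes_compose[OF less.prems sp])
    have iw0: "inv w0 = r \<circ> s" unfolding w0_def r_def
      using o_inv_distrib[OF permutes_bij[OF sp] permutes_bij[OF less.prems]] s_def by simp
    have "card (invset n (r \<circ> s)) < card (invset n ((r \<circ> s) \<circ> transpose k (k+1)))"
      by (rule inj_strict) (use k in \<open>auto simp: s_def\<close>)
    also have "(r \<circ> s) \<circ> transpose k (k+1) = r" by (simp add: s_def comp_assoc)
    finally have lt0: "card (invset n (r \<circ> s)) < card (invset n r)" .
    have lt: "card (invset n (inv w0)) < card (invset n (inv w))"
      unfolding iw0 r_def[symmetric] by (rule lt0)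
    obtain ss0 where ss0: "set ss0 \<subseteq> simple_transpositions n" "w0 = foldr (\<circ>) ss0 id"
      "length ss0 \<le> card (invset n (inv w0))"
      using less.hyps[OF lt w0p] by blast
    have "s \<in> simple_transpositions n" using k by (auto simp: s_def simple_transpositions_def)
    moreover have "w = foldr (\<circ>) (s # ss0) id"
    proof -
      have "foldr (\<circ>) (s # ss0) id = s \<circ> (s \<circ> w)" using ss0(2) w0_def by simp
      also have "\<dots> = w" by (simp add: s_def flip: comp_assoc)
      finally show ?thesis by simp
    qed
    ultimately show ?thesis using ss0 lt
      by (intro exI[of _ "s # ss0"]) auto
  next
    case False
    have "r k < r (k+1)" if "1 \<le> k" "k < n" for k
    proof -
      have "r k \<noteq> r (k+1)" using permutes_inj[OF rp] by (metis injD n_not_Suc_n Suc_eq_plus1)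
      thus ?thesis using False that by auto
    qed
    hence "r = id" using mono_perm_id[OF rp] by blast
    hence "w = id" using permutes_inv_inv[OF less.prems] r_def by (metis inv_id)
    thus ?thesis by (intro exI[of _ "[]"]) auto
  qed
qed

lemma len_eq:
  assumes "w permutes {1..n}"
  shows "len n w = card (invset n (inv w))"
proof -
  let ?P = "\<lambda>k. \<exists>ss. length ss = k \<and> set ss \<subseteq> simple_transpositions n \<and> w = foldr (\<circ>) ss id"
  obtain ss where ss: "set ss \<subseteq> simple_transpositions n" "w = foldr (\<circ>) ss id"
      "length ss \<le> card (invset n (inv w))" using upper[OF assms] by blast
  have P: "?P (length ss)" using ss by blast
  have "len n w = Least ?P" by (simp add: len_def)
  hence l1: "len n w \<le> length ss" using Least_le[of ?P, OF P] by simp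
  have "?P (Least ?P)" using LeastI[of ?P, OF P] .
  then obtain ss' where "length ss' = Least ?P" "set ss' \<subseteq> simple_transpositions n" "w = foldr (\<circ>) ss' id"
    by blast
  hence "length ss' = len n w" "set ss' \<subseteq> simple_transpositions n" "w = foldr (\<circ>) ss' id"
    using \<open>len n w = Least ?P\<close> by simp_all
  hence "card (invset n (inv w)) \<le> len n w" using lower by metis
  thus ?thesis using l1 ss(3) by simp
qed

lemma direction:
  assumes wp: "w permutes {1..n}" and ab: "a < b" "a \<in> {1..n}" "b \<in> {1..n}"
    and i: "inv w b < inv w a"
  shows "len n (transpose a b \<circ> w) < len n w"
proof -
  have tp: "transpose a b permutes {1..n}" using ab by (intro permutes_swap_id) auto
  have wp': "transpose a b \<circ> w permutes {1..n}" by (rule permutes_compose[OF wp tp])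
  have iw: "inv (transpose a b \<circ> w) = inv w \<circ> transpose a b"
    using o_inv_distrib[OF permutes_bij[OF tp] permutes_bij[OF wp]] by simp
  have "card (invset n (inv w \<circ> transpose a b)) < card (invset n ((inv w \<circ> transpose a b) \<circ> transpose a b))"
    by (rule inj_strict) (use ab i in auto)
  also have "(inv w \<circ> transpose a b) \<circ> transpose a b = inv w" by (simp add: comp_assoc)
  finally have "card (invset n (inv w \<circ> transpose a b)) < card (invset n (inv w))" .
  thus ?thesis unfolding len_eq[OF wp] len_eq[OF wp'] iw .
qed

lemma edge_up:
  assumes e: "bruhat_edge n w w'"
  shows "\<exists>a b. a < b \<and> a \<in> {1..n} \<and> b \<in> {1..n} \<and> w' = transpose a b \<circ> w \<and> inv w a < inv w b"
proof -
  have wp: "w permutes {1..n}" and lt: "len n w < len n w'"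
    using e by (auto simp: bruhat_edge_def Sym_def)
  obtain a0 b0 where t: "w' \<circ> inv w = transpose a0 b0" "a0 \<in> {1..n}" "b0 \<in> {1..n}" "a0 \<noteq> b0"
    using e by (auto simp: bruhat_edge_def transpositions_def)
  define a where "a = min a0 b0"
  define b where "b = max a0 b0"
  have ab: "a < b" "a \<in> {1..n}" "b \<in> {1..n}" using t by (auto simp: a_def b_def min_def max_def)
  have tab: "transpose a b = transpose a0 b0"
    by (auto simp: a_def b_def min_def max_def transpose_commute)
  have "w' = (w' \<circ> inv w) \<circ> w" by (simp add: comp_assoc permutes_inv_o(2)[OF wp])
  hence w': "w' = transpose a b \<circ> w" using t(1) tab by simp
  have "inv w a \<noteq> inv w b" using permutes_inj[OF permutes_inv[OF wp]] ab(1) by (metis injD less_irrefl)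
  moreover have "\<not> inv w b < inv w a"
    using direction[OF wp ab] lt w' by auto
  ultimately show ?thesis using ab w' by (intro exI[of _ a] exI[of _ b]) auto
qed



lemma flip_paths:
  assumes "flip_step n h u v q q'"
  shows "q' \<in> paths n h u v"
proof -
  from assms obtain i z where q: "q \<in> paths n h u v" and i: "1 \<le> i" "i \<le> h - 1" and
    e: "bruhat_edge n (q ! (i - 1)) z" "bruhat_edge n z (q ! (i + 1))" and q': "q' = q[i := z]"
    unfolding flip_step_def by blast
  have lq: "length q = h + 1" "q ! 0 = u" "q ! h = v" "\<And>j. j < h \<Longrightarrow> bruhat_edge n (q ! j) (q ! (j + 1))"
    using q by (auto simp: paths_def)
  have ih: "i < h" using i by linarith
  have "bruhat_edge n (q' ! j) (q' ! (j + 1))" if j: "j < h" for j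
  proof -
    consider "j + 1 = i" | "j = i" | "j + 1 \<noteq> i" "j \<noteq> i" by blast
    thus ?thesis
    proof cases
      case 1
      hence "j = i - 1" "j \<noteq> i" by auto
      thus ?thesis using 1 e(1) q' lq(1) ih by simp
    next
      case 2
      thus ?thesis using e(2) q' lq(1) ih by simp
    next
      case 3
      thus ?thesis using lq(4)[OF j] q' by simp
    qed
  qed
  moreover have "length q' = h + 1" "q' ! 0 = u" "q' ! h = v" using q' lq i ih by auto
  ultimately show ?thesis by (auto simp: paths_def)
qed

lemma F_paths:
  assumes "flipclass n h u v F"
  shows "F \<subseteq> paths n h u v"
proof -
  from assms obtain p where p: "p \<in> paths n h u v" and F: "F = {q. (flip_step n h u v)\<^sup>*\<^sup>* p q}"
    unfolding flipclass_def by blast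
  have "(flip_step n h u v)\<^sup>*\<^sup>* p q \<Longrightarrow> q \<in> paths n h u v" for q
    by (induction rule: rtranclp_induct) (use p flip_paths in auto)
  thus ?thesis using F by blast
qed

lemma mkvalid:
  assumes e1: "bruhat_edge n x z" and e2: "bruhat_edge n z y"
  shows "\<exists>a b. z = transpose a b \<circ> x \<and> valid (y \<circ> inv x) (inv x) a b"
proof -
  obtain a b where ab: "a < b" "z = transpose a b \<circ> x" "inv x a < inv x b"
    using edge_up[OF e1] by blast
  obtain c d where cd: "c < d" "y = transpose c d \<circ> z" "inv z c < inv z d"
    using edge_up[OF e2] by blast
  have xp: "x permutes {1..n}" using e1 by (auto simp: bruhat_edge_def Sym_def)
  have iz: "inv z = inv x \<circ> transpose a b"
    using ab(2) o_inv_distrib[OF bij_transpose permutes_bij[OF xp]] by simp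
  have "y \<circ> inv x = transpose c d \<circ> transpose a b \<circ> (x \<circ> inv x)"
    using cd(2) ab(2) by (simp add: comp_assoc)
  hence g: "y \<circ> inv x = transpose c d \<circ> transpose a b" using permutes_inv_o(1)[OF xp] by simp
  have "inv x (transpose a b c) < inv x (transpose a b d)" using cd(3) iz by simp
  hence "valid (y \<circ> inv x) (inv x) a b" using ab cd(1) g unfolding valid_def by blast
  thus ?thesis using ab(2) by blast
qed

lemma card_le2:
  "card {z. bruhat_edge n x z \<and> bruhat_edge n z y} \<le> 2"
proof (rule ccontr)
  let ?S = "{z. bruhat_edge n x z \<and> bruhat_edge n z y}"
  assume "\<not> card ?S \<le> 2"
  hence "3 \<le> card ?S" by simp
  then obtain B where B: "B \<subseteq> ?S" "card B = 3" using obtain_subset_with_card_n by metis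
  then obtain z1 z2 z3 where z: "B = {z1,z2,z3}" "z1 \<noteq> z2" "z2 \<noteq> z3" "z1 \<noteq> z3"
    using card_3_iff by metis
  have zs: "z1 \<in> ?S" "z2 \<in> ?S" "z3 \<in> ?S" using B z by auto
  obtain a1 b1 where v1: "z1 = transpose a1 b1 \<circ> x" "valid (y \<circ> inv x) (inv x) a1 b1"
    using mkvalid zs(1) by blast
  obtain a2 b2 where v2: "z2 = transpose a2 b2 \<circ> x" "valid (y \<circ> inv x) (inv x) a2 b2"
    using mkvalid zs(2) by blast
  obtain a3 b3 where v3: "z3 = transpose a3 b3 \<circ> x" "valid (y \<circ> inv x) (inv x) a3 b3"
    using mkvalid zs(3) by blast
  have "(a1,b1) \<noteq> (a2,b2)" "(a1,b1) \<noteq> (a3,b3)" "(a2,b2) \<noteq> (a3,b3)"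
    using v1(1) v2(1) v3(1) z by auto
  thus False using core[OF v1(2) v2(2) v3(2)] by blast
qed

theorem lemma5p4:
  fixes n h i :: nat and u v x y :: "nat \<Rightarrow> nat"
    and F :: "(nat \<Rightarrow> nat) list set"
  assumes "1 \<le> i" and "i \<le> h - 1"
    and "u \<in> Sym n" and "v \<in> Sym n" and "bruhat_less n u v"
    and "flipclass n h u v F"
    and "ts_vertex h F (x, i - 1)" and "ts_vertex h F (y, i + 1)"
  shows "finite {z. ts_edge h F (x, i - 1) (z, i) \<and> ts_edge h F (z, i) (y, i + 1)}
    \<and> card {z. ts_edge h F (x, i - 1) (z, i) \<and> ts_edge h F (z, i) (y, i + 1)} \<in> {0, 1, 2}"
proof -
  let ?T = "{z. ts_edge h F (x, i - 1) (z, i) \<and> ts_edge h F (z, i) (y, i + 1)}"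
  let ?S = "{z. bruhat_edge n x z \<and> bruhat_edge n z y}"
  have Fp: "F \<subseteq> paths n h u v" using F_paths assms(6) .
  have ih: "i < h" using assms(1,2) by linarith
  have sub: "?T \<subseteq> ?S"
  proof
    fix z assume "z \<in> ?T"
    then obtain p q where p: "p \<in> F" "p ! (i - 1) = x" "p ! i = z"
      and q: "q \<in> F" "q ! i = z" "q ! (i + 1) = y"
      unfolding ts_edge_def by auto
    have "bruhat_edge n (p ! (i - 1)) (p ! (i - 1 + 1))"
      using Fp p(1) ih unfolding paths_def by auto
    moreover have "i - 1 + 1 = i" using assms(1) by simp
    ultimately have e1: "bruhat_edge n x z" using p by simp
    have e2: "bruhat_edge n z y" using Fp q ih unfolding paths_def by auto
    show "z \<in> ?S" using e1 e2 by simp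
  qed
  have "?S \<subseteq> {p. p permutes {1..n}}" by (auto simp: bruhat_edge_def Sym_def)
  hence fS: "finite ?S" using finite_permutations[of "{1..n::nat}"] finite_subset by blast
  hence fT: "finite ?T" using sub finite_subset by blast
  have "card ?T \<le> 2" using card_mono[OF fS sub] card_le2[of n x y] by linarith
  hence "card ?T \<in> {0,1,2}" by auto
  thus ?thesis using fT by blast
qed

end
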